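(* Let $\{d_{k,j}:k,j\geq 0\}$ be nonnegative numbers such that $D_j(\delta):=\sum_{k\geq 0}d_{k,j}\delta^k\in(0,\infty)$ for all $\delta>0$ and all $j\geq 0$. Let $\{\delta_j(\cdot):j\geq 0\}$ be positive functions on $[0,\infty)$ with $\delta_j(t)\to\infty$ as $t\to\infty$ for every $j$, assume $\sum_{j\geq 0}\frac{d_{j,j}\delta^j}{D_j(\delta)}\in(0,\infty)$ for all $\delta>0$, and let $\{N(t):t\geq 0\}$ be nonnegative integer valued random variables with $$P(N(t)=k)=\frac{\frac{d_{k,k}(\delta_k(t))^k}{D_k(\delta_k(t))}}{\sum_{j\geq 0}\frac{d_{j,j}(\delta_j(t))^j}{D_j(\delta_j(t))}},\quad k\geq 0.$$ Assume the following: (B1) there exists an integer $n\geq 0$ such that for all $j\geq n$, $d_{k,j}=d_k$ for all $k\geq 0$ (so $D_j=D:=\sum_{k\ge0}d_k\delta^k$) and $\delta_j(\cdot)=\delta(\cdot)$ do not depend on $j$; moreover there exist functions $v:(0,\infty)\to(0,\infty)$ with $v(t)\to\infty$ as $t\to\infty$, and a differentiable function $\Delta:(0,\infty)\to\mathbb{R}$, such that $\lim_{t\to\infty}\frac{1}{v(t)}\log D(ut)=\Delta(u)$ for all $u>0$; (B2) the set $\{k\geq 0:d_{k,k}>0\}$ is unbounded; (B3) for all $k\in\{0,1,\ldots,n-1\}$: if $d_k>0$ then $\lim_{t\to\infty}\frac{d_{k,k}(\delta_k(t))^k/D_k(\delta_k(t))}{d_k(\delta(t))^k/D(\delta(t))}=0$,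 and if $d_k=0$ then $d_{k,k}=0$. Then $\left\{\frac{N(t)}{v(\delta(t))}:t>0\right\}$ satisfies the large deviation principle with speed $v(\delta(t))$ and good rate function $\Lambda^*(x):=\sup_{\theta\in\mathbb{R}}\{\theta x-\Lambda(\theta)\}$, where $\Lambda(\theta):=\Delta(e^\theta)-\Delta(1)$.
   Context: A family of real random variables $\{X_t:t>0\}$ satisfies the large deviation principle (LDP) with speed $v_t\to\infty$ and rate function $I$ (a lower semicontinuous map $\mathbb{R}\to[0,\infty]$; good if all level sets $\{I\le\eta\}$ are compact) if $\limsup_{t\to\infty}\frac{1}{v_t}\log P(X_t\in C)\leq-\inf_{x\in C}I(x)$ for all closed $C$ and $\liminf_{t\to\infty}\frac{1}{v_t}\log P(X_t\in O)\geq-\inf_{x\in O}I(x)$ for all open $O$. *)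

theory Defs
  imports "HOL-Probability.Probability"
begin

definition gen_series :: "(nat \<Rightarrow> real) \<Rightarrow> real \<Rightarrow> real" where
  "gen_series c x = (\<Sum>k. c k * x ^ k)"

definition elog :: "real \<Rightarrow> ereal" where
  "elog p = (if p \<le> 0 then -\<infinity> else ereal (ln p))"

definition rate_function :: "(real \<Rightarrow> ereal) \<Rightarrow> bool" where
  "rate_function I \<longleftrightarrow> (\<forall>x. I x \<ge> 0) \<and> (\<forall>\<eta>::real. closed {x. I x \<le> ereal \<eta>})"

definition good_rate_function :: "(real \<Rightarrow> ereal) \<Rightarrow> bool" where
  "good_rate_function I \<longleftrightarrow> rate_function I \<and> (\<forall>\<eta>::real. compact {x. I x \<le> ereal \<eta>})"

text \<open>LDP for a family of real random variables X_t, given through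
  P t A = P(X_t \<in> A), with speed s and rate function I, as t \<rightarrow> \<infinity>.\<close>
definition LDP :: "(real \<Rightarrow> real set \<Rightarrow> real) \<Rightarrow> (real \<Rightarrow> real) \<Rightarrow> (real \<Rightarrow> ereal) \<Rightarrow> bool" where
  "LDP P s I \<longleftrightarrow> rate_function I \<and>
     (\<forall>C. closed C \<longrightarrow>
        Limsup at_top (\<lambda>t. ereal (1 / s t) * elog (P t C)) \<le> - (INF x\<in>C. I x)) \<and>
     (\<forall>U. open U \<longrightarrow>
        Liminf at_top (\<lambda>t. ereal (1 / s t) * elog (P t U)) \<ge> - (INF x\<in>U. I x))"

definition legendre :: "(real \<Rightarrow> real) \<Rightarrow> real \<Rightarrow> ereal" where
  "legendre L x = (SUP \<theta>\<in>UNIV. ereal (\<theta> * x - L \<theta>))"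

end

theory Submission
  imports Defs
begin

locale ldp_nat =
  fixes p :: "real \<Rightarrow> nat \<Rightarrow> real" and s :: "real \<Rightarrow> real" and \<Lambda> :: "real \<Rightarrow> real"
  assumes p_nonneg: "\<And>t k. p t k \<ge> 0"
    and p_sums: "\<And>t. p t sums 1"
    and s_pos: "\<And>t. s t > 0"
    and s_lim: "filterlim s at_top at_top"
    and L_summable: "\<And>t \<theta>. summable (\<lambda>k. exp (\<theta> * real k) * p t k)"
    and L_lim: "\<And>\<theta>. ((\<lambda>t. ln (\<Sum>k. exp (\<theta> * real k) * p t k) / s t) \<longlongrightarrow> \<Lambda> \<theta>) at_top"
    and \<Lambda>_diff: "\<And>\<theta>. \<Lambda> differentiable (at \<theta>)"
begin

definition L where "L t \<theta> = (\<Sum>k. exp (\<theta> * real k) * p t k)"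
definition Pw where "Pw t \<eta> A = (\<Sum>k. if real k / s t \<in> A then exp (\<eta> * real k) * p t k else 0)"
definition P where "P t A = (\<Sum>k. if real k / s t \<in> A then p t k else 0)"

lemma P_Pw: "P t A = Pw t 0 A"
  unfolding P_def Pw_def by (intro suminf_cong) simp

lemma Pw_summable: "summable (\<lambda>k. if real k / s t \<in> A then exp (\<eta> * real k) * p t k else 0)"
  by (rule summable_comparison_test'[OF L_summable[of \<eta> t]]) (auto simp: p_nonneg)

lemma Pw_nonneg: "Pw t \<eta> A \<ge> 0"
  unfolding Pw_def by (rule suminf_nonneg[OF Pw_summable]) (auto simp: p_nonneg)

lemma Pw_mono: "A \<subseteq> B \<Longrightarrow> Pw t \<eta> A \<le> Pw t \<eta> B"
  unfolding Pw_def by (rule suminf_le[OF _ Pw_summable Pw_summable]) (auto simp: p_nonneg)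

lemma Pw_UNIV: "Pw t \<eta> UNIV = L t \<eta>"
  by (simp add: Pw_def L_def)

lemma Pw_compl: "Pw t \<eta> A + Pw t \<eta> (-A) = L t \<eta>"
proof -
  have "Pw t \<eta> A + Pw t \<eta> (-A) = (\<Sum>k. (if real k / s t \<in> A then exp (\<eta> * real k) * p t k else 0)
     + (if real k / s t \<in> -A then exp (\<eta> * real k) * p t k else 0))"
    unfolding Pw_def by (rule suminf_add[OF Pw_summable Pw_summable])
  also have "\<dots> = L t \<eta>" unfolding L_def by (intro suminf_cong) auto
  finally show ?thesis .
qed

lemma Pw_union: "Pw t \<eta> (A \<union> B) \<le> Pw t \<eta> A + Pw t \<eta> B"
proof -
  have "Pw t \<eta> (A \<union> B) \<le> (\<Sum>k. (if real k / s t \<in> A then exp (\<eta> * real k) * p t k else 0)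
     + (if real k / s t \<in> B then exp (\<eta> * real k) * p t k else 0))"
    unfolding Pw_def by (rule suminf_le[OF _ Pw_summable summable_add[OF Pw_summable Pw_summable]])
      (auto simp: p_nonneg)
  also have "\<dots> = Pw t \<eta> A + Pw t \<eta> B"
    unfolding Pw_def by (rule suminf_add[OF Pw_summable Pw_summable, symmetric])
  finally show ?thesis .
qed

lemma P_le1: "P t A \<le> 1"
proof -
  have "P t A \<le> (\<Sum>k. p t k)"
    unfolding P_def by (rule suminf_le[OF _ _ sums_summable[OF p_sums]])
      (auto simp: p_nonneg intro: summable_comparison_test'[OF sums_summable[OF p_sums]])
  also have "\<dots> = 1" using p_sums sums_unique by metis
  finally show ?thesis .
qed

lemma L_pos: "L t \<theta> > 0"
proof -
  have "\<exists>i. p t i > 0"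
  proof (rule ccontr)
    assume "\<not> ?thesis"
    then have "\<forall>i. p t i = 0" using p_nonneg by (metis not_less order.antisym)
    then have "p t = (\<lambda>_. 0)" by auto
    with p_sums[of t] show False by (metis sums_0 sums_unique2 zero_neq_one)
  qed
  then obtain i where i: "p t i > 0" by blast
  show ?thesis unfolding L_def
    by (rule suminf_pos2[OF L_summable, of _ _ i]) (auto simp: p_nonneg i)
qed

lemma chernoff:
  assumes "\<And>x. x \<in> C \<Longrightarrow> \<theta> * a \<le> \<theta> * x"
  shows "Pw t \<eta> C \<le> exp (- \<theta> * a * s t) * L t (\<eta> + \<theta>)"
proof -
  have "Pw t \<eta> C \<le> (\<Sum>k. exp (- \<theta> * a * s t) * (exp ((\<eta> + \<theta>) * real k) * p t k))"
    unfolding Pw_def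
  proof (rule suminf_le[OF _ Pw_summable summable_mult[OF L_summable]])
    fix k
    show "(if real k / s t \<in> C then exp (\<eta> * real k) * p t k else 0) \<le> exp (- \<theta> * a * s t) * (exp ((\<eta> + \<theta>) * real k) * p t k)"
    proof (cases "real k / s t \<in> C")
      case True
      then have "\<theta> * a \<le> \<theta> * (real k / s t)" using assms by blast
      then have "\<theta> * a * s t \<le> \<theta> * real k" using s_pos[of t]
        by (simp add: field_simps)
      then have "exp (\<eta> * real k) \<le> exp (- \<theta> * a * s t) * exp ((\<eta> + \<theta>) * real k)"
        by (simp add: exp_add[symmetric] algebra_simps)
      then show ?thesis using True p_nonneg[of t k] by (simp add: mult_right_mono mult.assoc[symmetric])
    qed (simp add: p_nonneg)
  qed
  also have "\<dots> = exp (- \<theta> * a * s t) * L t (\<eta> + \<theta>)"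
    unfolding L_def by (rule suminf_mult[OF L_summable])
  finally show ?thesis .
qed

definition \<Lambda>t where "\<Lambda>t t \<theta> = ln (L t \<theta>) / s t"

lemma \<Lambda>t_lim: "((\<lambda>t. \<Lambda>t t \<theta>) \<longlongrightarrow> \<Lambda> \<theta>) at_top"
  using L_lim[of \<theta>] by (simp add: \<Lambda>t_def L_def)

lemma L_exp: "L t \<theta> = exp (s t * \<Lambda>t t \<theta>)"
  using L_pos[of t \<theta>] s_pos[of t] by (simp add: \<Lambda>t_def)


lemma ln_L_convex:
  assumes u: "0 \<le> u" "u \<le> 1"
  shows "ln (L t ((1 - u) * a + u * b)) \<le> (1 - u) * ln (L t a) + u * ln (L t b)"
proof -
  define A where "A = L t a"
  define B where "B = L t b"
  define G where "G = exp ((1 - u) * ln A + u * ln B)"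
  have A: "A > 0" and B: "B > 0" using L_pos by (auto simp: A_def B_def)
  have G: "G > 0" by (simp add: G_def)
  have termk: "exp (((1 - u) * a + u * b) * real k) * p t k
     \<le> G * ((1 - u) * (exp (a * real k) * p t k / A) + u * (exp (b * real k) * p t k / B))" for k
  proof (cases "p t k = 0")
    case False
    then have pk: "p t k > 0" using p_nonneg[of t k] by simp
    define X where "X = a * real k + ln (p t k) - ln A"
    define Y where "Y = b * real k + ln (p t k) - ln B"
    have eX: "exp X = exp (a * real k) * p t k / A" using pk A
      by (simp add: X_def exp_diff exp_add)
    have eY: "exp Y = exp (b * real k) * p t k / B" using pk B
      by (simp add: Y_def exp_diff exp_add)
    have "(1 - u) * X + u * Y = ((1 - u) * a + u * b) * real k + ln (p t k) - ((1 - u) * ln A + u * ln B)"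
      by (simp add: X_def Y_def algebra_simps)
    then have "exp (((1 - u) * a + u * b) * real k) * p t k = G * exp ((1 - u) * X + u * Y)"
      using pk by (simp add: G_def exp_diff exp_add)
    also have "exp ((1 - u) * X + u * Y) \<le> (1 - u) * exp X + u * exp Y"
      using convex_onD[OF exp_convex, of u X Y] u by simp
    finally show ?thesis using G eX eY by (simp add: mult_left_mono)
  qed (simp add: p_nonneg)
  have sA: "summable (\<lambda>k. exp (a * real k) * p t k / A)" by (intro summable_divide L_summable)
  have sB: "summable (\<lambda>k. exp (b * real k) * p t k / B)" by (intro summable_divide L_summable)
  have "L t ((1 - u) * a + u * b) \<le> (\<Sum>k. G * ((1 - u) * (exp (a * real k) * p t k / A) + u * (exp (b * real k) * p t k / B)))"
    unfolding L_def
    by (rule suminf_le[OF termk L_summable]) (intro summable_mult summable_add sA sB)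
  also have "\<dots> = G * ((1 - u) * (\<Sum>k. exp (a * real k) * p t k / A) + u * (\<Sum>k. exp (b * real k) * p t k / B))"
    by (rule sums_unique[symmetric], intro sums_mult sums_add summable_sums sA sB)
  also have "(\<Sum>k. exp (a * real k) * p t k / A) = 1"
    using A by (simp add: suminf_divide[OF L_summable] A_def L_def[symmetric])
  also have "(\<Sum>k. exp (b * real k) * p t k / B) = 1"
    using B by (simp add: suminf_divide[OF L_summable] B_def L_def[symmetric])
  finally have "L t ((1 - u) * a + u * b) \<le> G" by simp
  then have "ln (L t ((1 - u) * a + u * b)) \<le> ln G" using L_pos G by (subst ln_le_cancel_iff) auto
  then show ?thesis by (simp add: G_def A_def B_def)
qed

lemma \<Lambda>_convex: "convex_on UNIV \<Lambda>"
proof (rule convex_onI)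
  fix u x y :: real assume u: "0 < u" "u < 1"
  have "\<Lambda> ((1 - u) * x + u * y) \<le> (1 - u) * \<Lambda> x + u * \<Lambda> y"
  proof (rule tendsto_le[OF trivial_limit_at_top_linorder _ \<Lambda>t_lim])
    show "((\<lambda>t. (1 - u) * \<Lambda>t t x + u * \<Lambda>t t y) \<longlongrightarrow> (1 - u) * \<Lambda> x + u * \<Lambda> y) at_top"
      by (intro tendsto_intros \<Lambda>t_lim)
    show "\<forall>\<^sub>F t in at_top. \<Lambda>t t ((1 - u) * x + u * y) \<le> (1 - u) * \<Lambda>t t x + u * \<Lambda>t t y"
    proof (intro always_eventually allI)
      fix t
      have "ln (L t ((1 - u) * x + u * y)) / s t \<le> ((1 - u) * ln (L t x) + u * ln (L t y)) / s t"
        using ln_L_convex[of u t x y] u s_pos[of t] by (simp add: divide_right_mono)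
      then show "\<Lambda>t t ((1 - u) * x + u * y) \<le> (1 - u) * \<Lambda>t t x + u * \<Lambda>t t y"
        by (simp add: \<Lambda>t_def add_divide_distrib)
    qed
  qed
  then show "\<Lambda> ((1 - u) *\<^sub>R x + u *\<^sub>R y) \<le> (1 - u) * \<Lambda> x + u * \<Lambda> y" by simp
qed simp

definition D where "D \<theta> = deriv \<Lambda> \<theta>"

lemma D_deriv: "(\<Lambda> has_real_derivative D \<theta>) (at \<theta>)"
  unfolding D_def using \<Lambda>_diff DERIV_deriv_iff_real_differentiable by blast

lemma tangent: "\<Lambda> x - \<Lambda> c \<ge> D c * (x - c)"
  by (rule convex_on_imp_above_tangent[OF \<Lambda>_convex]) (auto simp: D_deriv)

lemma D_mono: assumes "a \<le> b" shows "D a \<le> D b"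
proof -
  have "(D a - D b) * (b - a) \<le> 0"
    using tangent[of a b] tangent[of b a] by (simp add: algebra_simps)
  then show ?thesis using assms by (cases "a = b") (auto simp: mult_le_0_iff)
qed

lemma \<Lambda>t_0: "\<Lambda>t t 0 = 0"
  using p_sums[of t] by (simp add: \<Lambda>t_def L_def sums_iff)

lemma \<Lambda>_0: "\<Lambda> 0 = 0"
  using \<Lambda>t_lim[of 0] by (simp add: \<Lambda>t_0 tendsto_const_iff)

end

context ldp_nat
begin

abbreviation I where "I \<equiv> legendre \<Lambda>"

lemma I_ge: "ereal (\<theta> * x - \<Lambda> \<theta>) \<le> I x"
  unfolding legendre_def by (rule SUP_upper) simp

lemma I_nonneg: "I x \<ge> 0"
  using I_ge[of 0 x] by (simp add: \<Lambda>_0 zero_ereal_def)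

lemma I_le_iff: "I x \<le> ereal c \<longleftrightarrow> (\<forall>\<theta>. \<theta> * x - \<Lambda> \<theta> \<le> c)"
  unfolding legendre_def by (simp add: SUP_le_iff)

lemma I_gt_iff: "ereal c < I x \<longleftrightarrow> (\<exists>\<theta>. c < \<theta> * x - \<Lambda> \<theta>)"
  unfolding legendre_def by (simp add: less_SUP_iff)

lemma I_sublevel: "{x. I x \<le> ereal c} = (\<Inter>\<theta>. {x. \<theta> * x - \<Lambda> \<theta> \<le> c})"
  by (auto simp: I_le_iff)

lemma I_closed: "closed {x. I x \<le> ereal c}"
  unfolding I_sublevel by (intro closed_INT ballI closed_Collect_le continuous_intros)

lemma I_compact: "compact {x. I x \<le> ereal c}"
proof -
  have "{x. I x \<le> ereal c} \<subseteq> cball 0 (c + \<bar>\<Lambda> 1\<bar> + \<bar>\<Lambda> (-1)\<bar>)"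
  proof
    fix x assume "x \<in> {x. I x \<le> ereal c}"
    then have "\<forall>\<theta>. \<theta> * x - \<Lambda> \<theta> \<le> c" by (auto simp: I_le_iff)
    from this[rule_format, of 1] this[rule_format, of "-1"]
    have "x - \<Lambda> 1 \<le> c" "- x - \<Lambda> (-1) \<le> c" by auto
    then show "x \<in> cball 0 (c + \<bar>\<Lambda> 1\<bar> + \<bar>\<Lambda> (-1)\<bar>)" by (auto simp: dist_real_def)
  qed
  then have "bounded {x. I x \<le> ereal c}" using bounded_cball bounded_subset by blast
  then show ?thesis using I_closed compact_eq_bounded_closed by blast
qed

lemma good: "good_rate_function I"
  unfolding good_rate_function_def rate_function_def using I_nonneg I_closed I_compact by blast

lemma s_infty: "filterlim s at_infinity at_top"
  using s_lim filterlim_at_top_imp_at_infinity by blast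

lemma limsup_bound:
  assumes K: "K > 0" and ev: "\<forall>\<^sub>F t in at_top. P t A \<le> K * exp (- (s t * r))"
  shows "Limsup at_top (\<lambda>t. ereal (1 / s t) * elog (P t A)) \<le> ereal (- r)"
proof -
  have "\<forall>\<^sub>F t in at_top. ereal (1 / s t) * elog (P t A) \<le> ereal (ln K / s t - r)"
    using ev
  proof eventually_elim
    case (elim t)
    have st: "s t > 0" by (rule s_pos)
    show ?case
    proof (cases "P t A \<le> 0")
      case True
      then show ?thesis using st by (simp add: elog_def)
    next
      case False
      then have "ln (P t A) \<le> ln (K * exp (- (s t * r)))" using elim by simp
      also have "\<dots> = ln K - s t * r" using K by (simp add: ln_mult)
      finally have "ln (P t A) / s t \<le> (ln K - s t * r) / s t" using st by (simp add: divide_right_mono)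
      then show ?thesis using False st by (simp add: elog_def diff_divide_distrib)
    qed
  qed
  then have "Limsup at_top (\<lambda>t. ereal (1 / s t) * elog (P t A)) \<le> Limsup at_top (\<lambda>t. ereal (ln K / s t - r))"
    by (rule Limsup_mono)
  also have "\<dots> = ereal (- r)"
  proof (rule lim_imp_Limsup[OF trivial_limit_at_top_linorder])
    have "((\<lambda>t. ln K / s t - r) \<longlongrightarrow> 0 - r) at_top"
      by (intro tendsto_intros tendsto_divide_0[OF tendsto_const s_infty])
    then show "((\<lambda>t. ereal (ln K / s t - r)) \<longlongrightarrow> ereal (- r)) at_top" by (simp add: tendsto_ereal)
  qed
  finally show ?thesis .
qed

lemma liminf_bound:
  assumes g: "(g \<longlongrightarrow> c) at_top" and ev: "\<forall>\<^sub>F t in at_top. P t A \<ge> exp (- (s t * g t))"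
  shows "Liminf at_top (\<lambda>t. ereal (1 / s t) * elog (P t A)) \<ge> ereal (- c)"
proof -
  have "\<forall>\<^sub>F t in at_top. ereal (- g t) \<le> ereal (1 / s t) * elog (P t A)"
    using ev
  proof eventually_elim
    case (elim t)
    have st: "s t > 0" by (rule s_pos)
    have pos: "P t A > 0" using elim by (meson exp_gt_zero less_le_trans)
    have "ln (exp (- (s t * g t))) \<le> ln (P t A)" using elim pos by (subst ln_le_cancel_iff) auto
    then have "- (s t * g t) \<le> ln (P t A)" by simp
    then have "- g t \<le> ln (P t A) / s t" using st by (simp add: field_simps)
    then show ?case using pos st by (simp add: elog_def)
  qed
  then have "Liminf at_top (\<lambda>t. ereal (- g t)) \<le> Liminf at_top (\<lambda>t. ereal (1 / s t) * elog (P t A))"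
    by (rule Liminf_mono)
  moreover have "Liminf at_top (\<lambda>t. ereal (- g t)) = ereal (- c)"
    by (rule lim_imp_Liminf[OF trivial_limit_at_top_linorder]) (intro tendsto_intros g)
  ultimately show ?thesis by simp
qed

lemma P_le0: "Limsup at_top (\<lambda>t. ereal (1 / s t) * elog (P t A)) \<le> 0"
  using limsup_bound[of 1 A 0] P_le1 by (simp add: zero_ereal_def)

end

context ldp_nat
begin

lemma P_empty: "P t {} = 0"
  by (simp add: P_def)

lemma tail_bound:
  assumes "r < \<theta> * a - \<Lambda> \<theta>" and "\<And>x. x \<in> C \<Longrightarrow> \<theta> * a \<le> \<theta> * x"
  shows "\<forall>\<^sub>F t in at_top. P t C \<le> exp (- (s t * r))"
proof -
  have "\<forall>\<^sub>F t in at_top. \<Lambda>t t \<theta> < \<theta> * a - r"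
    using \<Lambda>t_lim[of \<theta>] assms(1) by (intro order_tendstoD(2)) auto
  then show ?thesis
  proof eventually_elim
    case (elim t)
    have "P t C \<le> exp (- \<theta> * a * s t) * L t (0 + \<theta>)"
      unfolding P_Pw by (rule chernoff) (use assms(2) in auto)
    also have "\<dots> = exp (- (s t * (\<theta> * a - \<Lambda>t t \<theta>)))"
      by (simp add: L_exp exp_add[symmetric] algebra_simps)
    also have "\<dots> \<le> exp (- (s t * r))"
      using elim s_pos[of t] by (simp add: mult_left_mono)
    finally show ?case .
  qed
qed

lemma I_D0: "I (D 0) \<le> 0"
proof -
  have "\<forall>\<theta>. \<theta> * D 0 - \<Lambda> \<theta> \<le> 0"
    using tangent[of 0] by (simp add: \<Lambda>_0 algebra_simps)
  then show ?thesis using I_le_iff[of "D 0" 0] by (simp add: zero_ereal_def)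
qed

lemma upper_right:
  assumes "closed C" "C \<subseteq> {D 0..}" "\<And>x. x \<in> C \<Longrightarrow> ereal r < I x" "r \<ge> 0"
  shows "\<forall>\<^sub>F t in at_top. P t C \<le> exp (- (s t * r))"
proof (cases "C = {}")
  case True
  then show ?thesis by (simp add: P_empty)
next
  case False
  have bdd: "bdd_below C" using assms(2) by (auto intro: bdd_belowI)
  define a where "a = Inf C"
  have aC: "a \<in> C" unfolding a_def using closed_contains_Inf[OF False bdd assms(1)] .
  then obtain \<theta> where th: "r < \<theta> * a - \<Lambda> \<theta>" using assms(3) I_gt_iff by blast
  have a0: "a \<ge> D 0" using aC assms(2) by auto
  have "\<theta> \<ge> 0"
  proof (rule ccontr)
    assume "\<not> \<theta> \<ge> 0"
    then have "\<theta> * a \<le> \<theta> * D 0" using a0 by (simp add: mult_left_mono_neg)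
    moreover have "\<Lambda> \<theta> \<ge> D 0 * \<theta>" using tangent[of 0 \<theta>] by (simp add: \<Lambda>_0)
    ultimately show False using th assms(4) by (simp add: algebra_simps)
  qed
  moreover have "\<And>x. x \<in> C \<Longrightarrow> a \<le> x" unfolding a_def using bdd by (simp add: cInf_lower)
  ultimately show ?thesis using th by (intro tail_bound[of r \<theta> a]) (auto simp: mult_left_mono)
qed

lemma upper_left:
  assumes "closed C" "C \<subseteq> {..D 0}" "\<And>x. x \<in> C \<Longrightarrow> ereal r < I x" "r \<ge> 0"
  shows "\<forall>\<^sub>F t in at_top. P t C \<le> exp (- (s t * r))"
proof (cases "C = {}")
  case True
  then show ?thesis by (simp add: P_empty)
next
  case False
  have bdd: "bdd_above C" using assms(2) by (auto intro: bdd_aboveI)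
  define a where "a = Sup C"
  have aC: "a \<in> C" unfolding a_def using closed_contains_Sup[OF False bdd assms(1)] .
  then obtain \<theta> where th: "r < \<theta> * a - \<Lambda> \<theta>" using assms(3) I_gt_iff by blast
  have a0: "a \<le> D 0" using aC assms(2) by auto
  have "\<theta> \<le> 0"
  proof (rule ccontr)
    assume "\<not> \<theta> \<le> 0"
    then have "\<theta> * a \<le> \<theta> * D 0" using a0 by (simp add: mult_left_mono)
    moreover have "\<Lambda> \<theta> \<ge> D 0 * \<theta>" using tangent[of 0 \<theta>] by (simp add: \<Lambda>_0)
    ultimately show False using th assms(4) by (simp add: algebra_simps)
  qed
  moreover have "\<And>x. x \<in> C \<Longrightarrow> x \<le> a" unfolding a_def using bdd by (simp add: cSup_upper)
  ultimately show ?thesis using th by (intro tail_bound[of r \<theta> a]) (auto simp: mult_left_mono_neg)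
qed

lemma upper:
  assumes C: "closed C"
  shows "Limsup at_top (\<lambda>t. ereal (1 / s t) * elog (P t C)) \<le> - (INF x\<in>C. I x)"
proof -
  define X where "X = Limsup at_top (\<lambda>t. ereal (1 / s t) * elog (P t C))"
  have "(INF x\<in>C. I x) \<le> - X"
  proof (rule dense_le)
    fix y assume y: "y < (INF x\<in>C. I x)"
    show "y \<le> - X"
    proof (cases y)
      case (real r)
      show ?thesis
      proof (cases "r \<le> 0")
        case True
        have "X \<le> 0" unfolding X_def by (rule P_le0)
        then have "0 \<le> - X" by (metis ereal_minus_le_minus ereal_uminus_zero)
        moreover have "ereal r \<le> 0" using True by (simp add: zero_ereal_def)
        ultimately show ?thesis using real by (metis order_trans)
      next
        case False
        have lt: "\<And>x. x \<in> C \<Longrightarrow> ereal r < I x" using y real by (simp add: less_INF_D)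
        have notin: "D 0 \<notin> C" using lt[of "D 0"] I_D0 False
          by (metis ereal_less_eq(3) less_le_not_le order_trans zero_ereal_def)
        have c1: "\<forall>\<^sub>F t in at_top. P t (C \<inter> {D 0..}) \<le> exp (- (s t * r))"
          using False C by (intro upper_right lt) (auto intro: closed_Int)
        have c2: "\<forall>\<^sub>F t in at_top. P t (C \<inter> {..D 0}) \<le> exp (- (s t * r))"
          using False C by (intro upper_left lt) (auto intro: closed_Int)
        have "\<forall>\<^sub>F t in at_top. P t C \<le> 2 * exp (- (s t * r))"
          using c1 c2
        proof eventually_elim
          case (elim t)
          have "C = (C \<inter> {D 0..}) \<union> (C \<inter> {..D 0})" by auto
          then have "P t C \<le> P t (C \<inter> {D 0..}) + P t (C \<inter> {..D 0})"
            unfolding P_Pw by (metis Pw_union)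
          then show ?case using elim by simp
        qed
        then have "X \<le> ereal (- r)" unfolding X_def by (intro limsup_bound) auto
        then show ?thesis using real by (metis ereal_minus_le_minus ereal_uminus_uminus uminus_ereal.simps(1))
      qed
    qed (use y in auto)
  qed
  then show ?thesis unfolding X_def by (metis ereal_minus_le_minus ereal_uminus_uminus)
qed

end

context ldp_nat
begin

lemma g_deriv: "((\<lambda>\<theta>. \<theta> * x - \<Lambda> \<theta>) has_real_derivative (x - D \<theta>)) (at \<theta>)"
  by (auto intro!: derivative_eq_intros D_deriv)

lemma \<Lambda>_cont: "continuous_on S \<Lambda>"
  using D_deriv by (meson DERIV_isCont continuous_at_imp_continuous_on)

lemma no_gap:
  assumes "\<And>\<eta>. D \<eta> \<noteq> x" "D \<eta>1 < x" "x < D \<eta>2"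
  shows False
proof -
  define g where "g \<theta> = \<theta> * x - \<Lambda> \<theta>" for \<theta>
  have gd: "(g has_real_derivative (x - D \<theta>)) (at \<theta>)" for \<theta> unfolding g_def by (rule g_deriv)
  have lt: "\<eta>1 < \<eta>2"
  proof (rule ccontr)
    assume "\<not> \<eta>1 < \<eta>2"
    then have "D \<eta>2 \<le> D \<eta>1" by (intro D_mono) simp
    then show False using assms by simp
  qed
  have "continuous_on {\<eta>1..\<eta>2} g" unfolding g_def by (intro continuous_intros \<Lambda>_cont)
  then obtain \<zeta> where z: "\<zeta> \<in> {\<eta>1..\<eta>2}" and zmax: "\<And>y. y \<in> {\<eta>1..\<eta>2} \<Longrightarrow> g y \<le> g \<zeta>"
    using continuous_attains_sup[of "{\<eta>1..\<eta>2}" g] lt by auto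
  consider "\<zeta> = \<eta>1" | "\<zeta> = \<eta>2" | "\<eta>1 < \<zeta>" "\<zeta> < \<eta>2" using z by fastforce
  then show False
  proof cases
    case 1
    obtain d where d: "d > 0" "\<And>h. h > 0 \<Longrightarrow> h < d \<Longrightarrow> g \<zeta> < g (\<zeta> + h)"
      using DERIV_pos_inc_right[OF gd[of \<zeta>]] assms 1 by auto
    define h where "h = min (d/2) (\<eta>2 - \<eta>1)"
    have "h > 0" "h < d" using d lt by (auto simp: h_def)
    then have "g \<zeta> < g (\<zeta> + h)" using d by blast
    moreover have "\<zeta> + h \<in> {\<eta>1..\<eta>2}" using 1 lt \<open>h > 0\<close> by (auto simp: h_def)
    ultimately show False using zmax by fastforce
  next
    case 2
    obtain d where d: "d > 0" "\<And>h. h > 0 \<Longrightarrow> h < d \<Longrightarrow> g \<zeta> < g (\<zeta> - h)"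
      using DERIV_neg_dec_left[OF gd[of \<zeta>]] assms 2 by auto
    define h where "h = min (d/2) (\<eta>2 - \<eta>1)"
    have "h > 0" "h < d" using d lt by (auto simp: h_def)
    then have "g \<zeta> < g (\<zeta> - h)" using d by blast
    moreover have "\<zeta> - h \<in> {\<eta>1..\<eta>2}" using 2 lt \<open>h > 0\<close> by (auto simp: h_def)
    ultimately show False using zmax by fastforce
  next
    case 3
    have "x - D \<zeta> = 0"
    proof (rule DERIV_local_max[OF gd[of \<zeta>], of "min (\<zeta> - \<eta>1) (\<eta>2 - \<zeta>)"])
      show "0 < min (\<zeta> - \<eta>1) (\<eta>2 - \<zeta>)" using 3 by simp
      show "\<forall>y. \<bar>\<zeta> - y\<bar> < min (\<zeta> - \<eta>1) (\<eta>2 - \<zeta>) \<longrightarrow> g y \<le> g \<zeta>"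
        by (auto intro!: zmax)
    qed
    then show False using assms(1)[of \<zeta>] by simp
  qed
qed

lemma find_eta:
  assumes c: "\<And>\<theta>. \<theta> * x - \<Lambda> \<theta> \<le> c" and U: "open U" "x \<in> U"
  shows "\<exists>\<eta>. D \<eta> \<in> U \<and> \<eta> * D \<eta> - \<Lambda> \<eta> \<le> c"
proof (cases "\<exists>\<eta>. D \<eta> = x")
  case True
  then show ?thesis using c U by metis
next
  case False
  then have ne: "\<And>\<eta>. D \<eta> \<noteq> x" by blast
  obtain \<epsilon> where e: "\<epsilon> > 0" "ball x \<epsilon> \<subseteq> U" using U openE by blast
  define g where "g \<theta> = \<theta> * x - \<Lambda> \<theta>" for \<theta>
  have gd: "(g has_real_derivative (x - D \<theta>)) (at \<theta>)" for \<theta> unfolding g_def by (rule g_deriv)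
  have g0: "g 0 = 0" by (simp add: g_def \<Lambda>_0)
  define T where "T = (\<bar>c\<bar> + 1) / \<epsilon>"
  have T: "T > 0" "T * \<epsilon> = \<bar>c\<bar> + 1" using e by (auto simp: T_def)
  consider "\<forall>\<eta>. D \<eta> < x" | "\<forall>\<eta>. D \<eta> > x"
    using no_gap[OF ne] ne by (metis linorder_neqE_linordered_idom)
  then show ?thesis
  proof cases
    case 1
    have "\<exists>\<eta>\<ge>0. D \<eta> > x - \<epsilon>"
    proof (rule ccontr)
      assume "\<not> ?thesis"
      then have le: "\<And>\<eta>. \<eta> \<ge> 0 \<Longrightarrow> D \<eta> \<le> x - \<epsilon>" by force
      obtain z where z: "0 < z" "z < T" "g T - g 0 = (T - 0) * (x - D z)"
        using MVT2[of 0 T g "\<lambda>\<theta>. x - D \<theta>"] T gd by blast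
      have "T * \<epsilon> \<le> T * (x - D z)" using le[of z] z T by (intro mult_left_mono) auto
      then have "g T \<ge> \<bar>c\<bar> + 1" using z g0 T by simp
      then show False using c[of T] by (simp add: g_def)
    qed
    then obtain \<eta> where eta: "\<eta> \<ge> 0" "D \<eta> > x - \<epsilon>" by blast
    have "D \<eta> \<in> ball x \<epsilon>" using eta 1[rule_format, of \<eta>] by (auto simp: dist_real_def abs_if)
    moreover have "\<eta> * D \<eta> \<le> \<eta> * x" using eta 1 by (simp add: less_imp_le mult_left_mono)
    ultimately show ?thesis using e c[of \<eta>] by force
  next
    case 2
    have "\<exists>\<eta>\<le>0. D \<eta> < x + \<epsilon>"
    proof (rule ccontr)
      assume "\<not> ?thesis"
      then have le: "\<And>\<eta>. \<eta> \<le> 0 \<Longrightarrow> D \<eta> \<ge> x + \<epsilon>" by force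
      obtain z where z: "-T < z" "z < 0" "g 0 - g (-T) = (0 - (-T)) * (x - D z)"
        using MVT2[of "-T" 0 g "\<lambda>\<theta>. x - D \<theta>"] T gd by auto
      have "T * (x - D z) \<le> T * (-\<epsilon>)" using le[of z] z T by (intro mult_left_mono) auto
      then have "g (-T) \<ge> \<bar>c\<bar> + 1" using z g0 T by simp
      then show False using c[of "-T"] by (simp add: g_def)
    qed
    then obtain \<eta> where eta: "\<eta> \<le> 0" "D \<eta> < x + \<epsilon>" by blast
    have "D \<eta> \<in> ball x \<epsilon>" using eta 2[rule_format, of \<eta>] by (auto simp: dist_real_def abs_if)
    moreover have "\<eta> * D \<eta> \<le> \<eta> * x" using eta 2 by (simp add: less_imp_le mult_left_mono_neg)
    ultimately show ?thesis using e c[of \<eta>] by force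
  qed
qed

end

context ldp_nat
begin

lemma tail_tilt:
  assumes q: "0 < \<theta> * a - \<Lambda> (\<eta> + \<theta>) + \<Lambda> \<eta>" and C: "\<And>x. x \<in> C \<Longrightarrow> \<theta> * a \<le> \<theta> * x"
  shows "\<forall>\<^sub>F t in at_top. Pw t \<eta> C \<le> L t \<eta> / 4"
proof -
  define q where "q = \<theta> * a - \<Lambda> (\<eta> + \<theta>) + \<Lambda> \<eta>"
  have "((\<lambda>t. \<theta> * a - \<Lambda>t t (\<eta> + \<theta>) + \<Lambda>t t \<eta>) \<longlongrightarrow> q) at_top"
    unfolding q_def by (intro tendsto_intros \<Lambda>t_lim)
  then have ev1: "\<forall>\<^sub>F t in at_top. q / 2 < \<theta> * a - \<Lambda>t t (\<eta> + \<theta>) + \<Lambda>t t \<eta>"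
    using q by (intro order_tendstoD(1)) (auto simp: q_def)
  have ev2: "\<forall>\<^sub>F t in at_top. s t \<ge> 2 * ln 4 / q"
    using s_lim by (simp add: filterlim_at_top)
  show ?thesis using ev1 ev2
  proof eventually_elim
    case (elim t)
    have st: "s t > 0" by (rule s_pos)
    have "Pw t \<eta> C \<le> exp (- \<theta> * a * s t) * L t (\<eta> + \<theta>)" by (rule chernoff) (use C in auto)
    also have "\<dots> = exp (- (s t * (\<theta> * a - \<Lambda>t t (\<eta> + \<theta>) + \<Lambda>t t \<eta>))) * L t \<eta>"
      by (simp add: L_exp exp_add[symmetric] algebra_simps)
    also have "exp (- (s t * (\<theta> * a - \<Lambda>t t (\<eta> + \<theta>) + \<Lambda>t t \<eta>))) \<le> exp (- (s t * (q / 2)))"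
      using elim st by (simp add: mult_left_mono)
    also have "s t * (q / 2) \<ge> ln 4"
    proof -
      have "2 * ln 4 / q * (q / 2) \<le> s t * (q / 2)" using elim q by (intro mult_right_mono) (auto simp: q_def)
      then show ?thesis using q by (simp add: q_def)
    qed
    then have "exp (- (s t * (q / 2))) \<le> exp (- ln 4)" by simp
    also have "exp (- ln 4) = (1 / 4 :: real)" by (simp add: exp_minus)
    finally show ?case using L_pos[of t \<eta>] by (simp add: mult_right_mono)
  qed
qed

lemma tilt_lower:
  assumes "\<epsilon> > 0"
  shows "P t {y - \<epsilon><..<y + \<epsilon>} \<ge> exp (- (s t * (\<eta> * y + \<bar>\<eta>\<bar> * \<epsilon>))) * Pw t \<eta> {y - \<epsilon><..<y + \<epsilon>}"
proof -
  define B where "B = {y - \<epsilon><..<y + \<epsilon>}"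
  define K where "K = s t * (\<eta> * y + \<bar>\<eta>\<bar> * \<epsilon>)"
  have st: "s t > 0" by (rule s_pos)
  have "Pw t \<eta> B \<le> (\<Sum>k. exp K * (if real k / s t \<in> B then p t k else 0))"
    unfolding Pw_def
  proof (rule suminf_le[OF _ Pw_summable summable_mult])
    fix k
    show "(if real k / s t \<in> B then exp (\<eta> * real k) * p t k else 0) \<le> exp K * (if real k / s t \<in> B then p t k else 0)"
    proof (cases "real k / s t \<in> B")
      case True
      then have "\<bar>real k / s t - y\<bar> < \<epsilon>" by (auto simp: B_def abs_if)
      then have "\<eta> * (real k / s t - y) \<le> \<bar>\<eta>\<bar> * \<epsilon>"
      proof -
        have "\<eta> * (real k / s t - y) \<le> \<bar>\<eta>\<bar> * \<bar>real k / s t - y\<bar>"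
          by (metis abs_ge_self abs_mult)
        also have "\<dots> \<le> \<bar>\<eta>\<bar> * \<epsilon>" using \<open>\<bar>real k / s t - y\<bar> < \<epsilon>\<close> by (simp add: mult_left_mono)
        finally show ?thesis .
      qed
      then have "\<eta> * real k / s t \<le> \<eta> * y + \<bar>\<eta>\<bar> * \<epsilon>" by (simp add: algebra_simps)
      then have "\<eta> * real k \<le> K" using st by (simp add: K_def field_simps)
      then show ?thesis using True p_nonneg[of t k] by (simp add: mult_right_mono)
    qed (simp add: p_nonneg)
    show "summable (\<lambda>k. if real k / s t \<in> B then p t k else 0)"
      using Pw_summable[of t B 0] by (simp cong: if_cong)
  qed
  also have "\<dots> = exp K * P t B"
    unfolding P_def by (rule suminf_mult) (use Pw_summable[of t B 0] in \<open>simp cong: if_cong\<close>)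
  finally have "Pw t \<eta> B \<le> exp K * P t B" .
  then have "exp (- K) * Pw t \<eta> B \<le> exp (-K) * (exp K * P t B)" by (simp add: mult_left_mono)
  also have "exp (-K) * (exp K * P t B) = P t B" by (simp add: mult.assoc[symmetric] exp_add[symmetric])
  finally show ?thesis unfolding B_def K_def .
qed

lemma lower_ball:
  assumes e: "\<epsilon> > 0" and y: "y = D \<eta>" and sub: "{y - \<epsilon><..<y + \<epsilon>} \<subseteq> U"
  shows "Liminf at_top (\<lambda>t. ereal (1 / s t) * elog (P t U)) \<ge> ereal (- (\<eta> * y + \<bar>\<eta>\<bar> * \<epsilon> - \<Lambda> \<eta>))"
proof -
  define B where "B = {y - \<epsilon><..<y + \<epsilon>}"
  obtain d1 where d1: "d1 > 0" "\<And>h. h > 0 \<Longrightarrow> h < d1 \<Longrightarrow> \<eta> * (y + \<epsilon>) - \<Lambda> \<eta> < (\<eta> + h) * (y + \<epsilon>) - \<Lambda> (\<eta> + h)"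
    using DERIV_pos_inc_right[OF g_deriv[of "y + \<epsilon>" \<eta>]] e y by auto
  obtain d2 where d2: "d2 > 0" "\<And>h. h > 0 \<Longrightarrow> h < d2 \<Longrightarrow> \<eta> * (y - \<epsilon>) - \<Lambda> \<eta> < (\<eta> - h) * (y - \<epsilon>) - \<Lambda> (\<eta> - h)"
    using DERIV_neg_dec_left[OF g_deriv[of "y - \<epsilon>" \<eta>]] e y by auto
  define h1 where "h1 = d1 / 2"
  define h2 where "h2 = d2 / 2"
  have q1: "0 < h1 * (y + \<epsilon>) - \<Lambda> (\<eta> + h1) + \<Lambda> \<eta>"
    using d1(2)[of h1] d1(1) by (simp add: h1_def algebra_simps)
  have q2: "0 < (- h2) * (y - \<epsilon>) - \<Lambda> (\<eta> + - h2) + \<Lambda> \<eta>"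
    using d2(2)[of h2] d2(1) by (simp add: h2_def algebra_simps)
  have ev1: "\<forall>\<^sub>F t in at_top. Pw t \<eta> {y + \<epsilon>..} \<le> L t \<eta> / 4"
    using d1 by (intro tail_tilt[OF q1]) (auto simp: h1_def)
  have ev2: "\<forall>\<^sub>F t in at_top. Pw t \<eta> {..y - \<epsilon>} \<le> L t \<eta> / 4"
    using d2 by (intro tail_tilt[OF q2]) (auto simp: h2_def)
  have ev: "\<forall>\<^sub>F t in at_top. P t U \<ge> exp (- (s t * (\<eta> * y + \<bar>\<eta>\<bar> * \<epsilon> - \<Lambda>t t \<eta> + ln 2 / s t)))"
    using ev1 ev2
  proof eventually_elim
    case (elim t)
    have st: "s t > 0" by (rule s_pos)
    have "- B \<subseteq> {y + \<epsilon>..} \<union> {..y - \<epsilon>}" by (auto simp: B_def)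
    then have "Pw t \<eta> (- B) \<le> Pw t \<eta> {y + \<epsilon>..} + Pw t \<eta> {..y - \<epsilon>}"
      by (meson Pw_mono Pw_union order_trans)
    then have "Pw t \<eta> B \<ge> L t \<eta> / 2" using Pw_compl[of t \<eta> B] elim by simp
    have "exp (- (s t * (\<eta> * y + \<bar>\<eta>\<bar> * \<epsilon> - \<Lambda>t t \<eta> + ln 2 / s t)))
        = exp (- (s t * (\<eta> * y + \<bar>\<eta>\<bar> * \<epsilon>))) * (L t \<eta> / 2)"
    proof -
      have "s t * (\<eta> * y + \<bar>\<eta>\<bar> * \<epsilon> - \<Lambda>t t \<eta> + ln 2 / s t)
          = s t * (\<eta> * y + \<bar>\<eta>\<bar> * \<epsilon>) + (- (s t * \<Lambda>t t \<eta>) + ln 2)"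
        using st by (simp add: field_simps)
      then have "exp (- (s t * (\<eta> * y + \<bar>\<eta>\<bar> * \<epsilon> - \<Lambda>t t \<eta> + ln 2 / s t)))
          = exp (- (s t * (\<eta> * y + \<bar>\<eta>\<bar> * \<epsilon>))) * (exp (s t * \<Lambda>t t \<eta>) * exp (- ln 2))"
        by (simp add: exp_add[symmetric])
      also have "exp (- ln 2) = (1/2::real)" by (simp add: exp_minus)
      finally show ?thesis by (simp add: L_exp)
    qed
    also have "\<dots> \<le> exp (- (s t * (\<eta> * y + \<bar>\<eta>\<bar> * \<epsilon>))) * Pw t \<eta> B"
      using \<open>Pw t \<eta> B \<ge> L t \<eta> / 2\<close> by (simp add: mult_left_mono)
    also have "\<dots> \<le> P t B" unfolding B_def by (rule tilt_lower[OF e])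
    also have "\<dots> \<le> P t U" unfolding P_Pw using sub by (intro Pw_mono) (simp add: B_def)
    finally show ?case .
  qed
  have "((\<lambda>t. \<eta> * y + \<bar>\<eta>\<bar> * \<epsilon> - \<Lambda>t t \<eta> + ln 2 / s t) \<longlongrightarrow> \<eta> * y + \<bar>\<eta>\<bar> * \<epsilon> - \<Lambda> \<eta> + 0) at_top"
    by (intro tendsto_intros \<Lambda>t_lim tendsto_divide_0[OF tendsto_const s_infty])
  from liminf_bound[OF this ev] show ?thesis by simp
qed

end

context ldp_nat
begin

lemma lower_point:
  assumes U: "open U" "D \<eta> \<in> U"
  shows "Liminf at_top (\<lambda>t. ereal (1 / s t) * elog (P t U)) \<ge> ereal (- (\<eta> * D \<eta> - \<Lambda> \<eta>))"
proof (rule ereal_le_epsilon2)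
  fix e :: real assume e: "e > 0"
  define y where "y = D \<eta>"
  obtain \<epsilon>0 where e0: "\<epsilon>0 > 0" "ball y \<epsilon>0 \<subseteq> U" using U openE y_def by blast
  define \<epsilon> where "\<epsilon> = min \<epsilon>0 (e / (\<bar>\<eta>\<bar> + 1))"
  have \<epsilon>: "\<epsilon> > 0" using e0 e by (simp add: \<epsilon>_def)
  have "\<epsilon> \<le> \<epsilon>0" by (simp add: \<epsilon>_def)
  then have "{y - \<epsilon><..<y + \<epsilon>} \<subseteq> ball y \<epsilon>0" by (auto simp: dist_real_def abs_if)
  then have sub: "{y - \<epsilon><..<y + \<epsilon>} \<subseteq> U" using e0 by blast
  have "\<epsilon> \<le> e / (\<bar>\<eta>\<bar> + 1)" by (simp add: \<epsilon>_def)
  then have "\<bar>\<eta>\<bar> * \<epsilon> \<le> \<bar>\<eta>\<bar> * (e / (\<bar>\<eta>\<bar> + 1))" by (rule mult_left_mono) simp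
  also have "\<dots> < e" using e by (simp add: field_simps)
  finally have small: "\<bar>\<eta>\<bar> * \<epsilon> < e" .
  have "ereal (- (\<eta> * y - \<Lambda> \<eta>)) \<le> ereal (- (\<eta> * y + \<bar>\<eta>\<bar> * \<epsilon> - \<Lambda> \<eta>)) + ereal e"
    using small by simp
  also have "\<dots> \<le> Liminf at_top (\<lambda>t. ereal (1 / s t) * elog (P t U)) + ereal e"
    by (intro add_right_mono lower_ball[OF \<epsilon> y_def sub])
  finally show "ereal (- (\<eta> * D \<eta> - \<Lambda> \<eta>)) \<le> Liminf at_top (\<lambda>t. ereal (1 / s t) * elog (P t U)) + ereal e"
    by (simp add: y_def)
qed

lemma lower:
  assumes U: "open U"
  shows "Liminf at_top (\<lambda>t. ereal (1 / s t) * elog (P t U)) \<ge> - (INF x\<in>U. I x)"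
proof -
  define Y where "Y = Liminf at_top (\<lambda>t. ereal (1 / s t) * elog (P t U))"
  have "- Y \<le> (INF x\<in>U. I x)"
  proof (rule INF_greatest)
    fix x assume x: "x \<in> U"
    show "- Y \<le> I x"
    proof (cases "I x")
      case (real c)
      then have "\<forall>\<theta>. \<theta> * x - \<Lambda> \<theta> \<le> c" using I_le_iff[of x c] by simp
      then obtain \<eta> where eta: "D \<eta> \<in> U" "\<eta> * D \<eta> - \<Lambda> \<eta> \<le> c"
        using find_eta[OF _ U x] by blast
      have "ereal (- (\<eta> * D \<eta> - \<Lambda> \<eta>)) \<le> Y" unfolding Y_def by (rule lower_point[OF U eta(1)])
      then have "- Y \<le> ereal (\<eta> * D \<eta> - \<Lambda> \<eta>)"
        by (metis ereal_minus_le_minus ereal_uminus_uminus uminus_ereal.simps(1))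
      also have "\<dots> \<le> I x" using eta real by simp
      finally show ?thesis .
    next
      case PInf then show ?thesis by simp
    next
      case MInf then show ?thesis using I_nonneg[of x] by simp
    qed
  qed
  then show ?thesis unfolding Y_def by (metis ereal_minus_le_minus ereal_uminus_uminus)
qed

theorem main: "LDP P s I \<and> good_rate_function I"
  using good upper lower unfolding LDP_def good_rate_function_def by blast

end

locale conc =
  fixes d :: "nat \<Rightarrow> nat \<Rightarrow> real"
    and \<delta>s :: "nat \<Rightarrow> real \<Rightarrow> real"
    and M :: "real \<Rightarrow> 'a measure"
    and N :: "real \<Rightarrow> 'a \<Rightarrow> nat"
    and n :: nat
    and dd :: "nat \<Rightarrow> real"
    and \<delta> :: "real \<Rightarrow> real"
    and v :: "real \<Rightarrow> real"
    and \<Delta> :: "real \<Rightarrow> real"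
  assumes d_nonneg: "\<And>k j. d k j \<ge> 0"
    and D_fin: "\<And>j x. x > 0 \<Longrightarrow> summable (\<lambda>k. d k j * x ^ k) \<and> gen_series (\<lambda>k. d k j) x > 0"
    and \<delta>s_pos: "\<And>j t. t \<ge> 0 \<Longrightarrow> \<delta>s j t > 0"
    and \<delta>s_lim: "\<And>j. filterlim (\<delta>s j) at_top at_top"
    and Z_fin: "\<And>x. x > 0 \<Longrightarrow>
        summable (\<lambda>j. d j j * x ^ j / gen_series (\<lambda>k. d k j) x) \<and>
        (\<Sum>j. d j j * x ^ j / gen_series (\<lambda>k. d k j) x) > 0"
    and prob_sp: "\<And>t. t \<ge> 0 \<Longrightarrow> prob_space (M t)"
    and N_meas: "\<And>t. t \<ge> 0 \<Longrightarrow> N t \<in> measurable (M t) (count_space UNIV)"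
    and N_law: "\<And>t k. t \<ge> 0 \<Longrightarrow>
        measure (M t) {\<omega> \<in> space (M t). N t \<omega> = k} =
          (d k k * (\<delta>s k t) ^ k / gen_series (\<lambda>i. d i k) (\<delta>s k t)) /
          (\<Sum>j. d j j * (\<delta>s j t) ^ j / gen_series (\<lambda>i. d i j) (\<delta>s j t))"
    and B1_d: "\<And>j k. j \<ge> n \<Longrightarrow> d k j = dd k"
    and B1_\<delta>: "\<And>j t. j \<ge> n \<Longrightarrow> t \<ge> 0 \<Longrightarrow> \<delta>s j t = \<delta> t"
    and v_pos: "\<And>t. t > 0 \<Longrightarrow> v t > 0"
    and v_lim: "filterlim v at_top at_top"
    and \<Delta>_diff: "\<And>u. u > 0 \<Longrightarrow> \<Delta> differentiable (at u)"
    and \<Delta>_lim: "\<And>u. u > 0 \<Longrightarrow>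
        ((\<lambda>t. ln (gen_series dd (u * t)) / v t) \<longlongrightarrow> \<Delta> u) at_top"
    and B2: "\<not> bdd_above {k. d k k > 0}"
    and B3_pos: "\<And>k. k < n \<Longrightarrow> dd k > 0 \<Longrightarrow>
        ((\<lambda>t. (d k k * (\<delta>s k t) ^ k / gen_series (\<lambda>i. d i k) (\<delta>s k t)) /
              (dd k * (\<delta> t) ^ k / gen_series dd (\<delta> t))) \<longlongrightarrow> 0) at_top"
    and B3_zero: "\<And>k. k < n \<Longrightarrow> dd k = 0 \<Longrightarrow> d k k = 0"
begin

definition Dg where "Dg = gen_series dd"
definition a where "a k t = d k k * (\<delta>s k t) ^ k / gen_series (\<lambda>i. d i k) (\<delta>s k t)"
definition A where "A u t = (\<Sum>k. u ^ k * a k t)"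

lemma \<delta>_eq: "t \<ge> 0 \<Longrightarrow> \<delta> t = \<delta>s n t"
  using B1_\<delta>[of n t] by simp

lemma \<delta>_pos: "t \<ge> 0 \<Longrightarrow> \<delta> t > 0"
  using \<delta>_eq \<delta>s_pos by simp

lemma \<delta>_lim: "filterlim \<delta> at_top at_top"
proof -
  have "\<forall>\<^sub>F t in at_top. \<delta>s n t = \<delta> t"
    using eventually_ge_at_top[of 0] by eventually_elim (simp add: \<delta>_eq)
  then show ?thesis using \<delta>s_lim[of n] filterlim_cong by blast
qed

lemma dd_eq: "(\<lambda>k. d k n) = dd"
  using B1_d[of n] by auto

lemma Dg_summable: "y > 0 \<Longrightarrow> summable (\<lambda>k. dd k * y ^ k)"
  using D_fin[of y n] B1_d[of n] by simp

lemma Dg_pos: "y > 0 \<Longrightarrow> Dg y > 0"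
  using D_fin[of y n] by (simp add: dd_eq Dg_def)

lemma Dg_sum: "Dg y = (\<Sum>k. dd k * y ^ k)"
  by (simp add: Dg_def gen_series_def)

lemma dd_nonneg: "dd k \<ge> 0"
  using d_nonneg[of k n] B1_d[of n k] by simp

lemma a_tail: "t \<ge> 0 \<Longrightarrow> k \<ge> n \<Longrightarrow> a k t = dd k * \<delta> t ^ k / Dg (\<delta> t)"
proof -
  assume t: "t \<ge> 0" and k: "k \<ge> n"
  have "(\<lambda>i. d i k) = dd" using B1_d[OF k] by auto
  then show ?thesis using B1_d[OF k, of k] B1_\<delta>[OF k t] by (simp add: a_def Dg_def)
qed

lemma a_nonneg: "t \<ge> 0 \<Longrightarrow> a k t \<ge> 0"
  unfolding a_def using d_nonneg[of k k] \<delta>s_pos[of t k] D_fin[of "\<delta>s k t" k]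
  by (intro divide_nonneg_pos mult_nonneg_nonneg) auto

lemma A_summable:
  assumes t: "t \<ge> 0" and u: "u > 0"
  shows "summable (\<lambda>k. u ^ k * a k t)"
proof -
  have ev: "\<forall>\<^sub>F k in sequentially. u ^ k * a k t = dd k * (u * \<delta> t) ^ k / Dg (\<delta> t)"
    using eventually_ge_at_top[of n] by eventually_elim (simp add: a_tail[OF t] power_mult_distrib)
  have "summable (\<lambda>k. dd k * (u * \<delta> t) ^ k / Dg (\<delta> t))"
    using Dg_summable[of "u * \<delta> t"] u \<delta>_pos[OF t] by (intro summable_divide) simp
  then show ?thesis using summable_cong[OF ev] by simp
qed

lemma A_split:
  assumes t: "t \<ge> 0" and u: "u > 0"
  shows "A u t * Dg (\<delta> t) = (\<Sum>k<n. u ^ k * a k t) * Dg (\<delta> t) + Dg (u * \<delta> t) - (\<Sum>k<n. dd k * (u * \<delta> t) ^ k)"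
proof -
  define y where "y = u * \<delta> t"
  have Dd: "Dg (\<delta> t) > 0" using Dg_pos \<delta>_pos[OF t] by simp
  have sy: "summable (\<lambda>k. dd k * y ^ k)" using Dg_summable u \<delta>_pos[OF t] by (simp add: y_def)
  have tail_eq: "(\<lambda>m. u ^ (m + n) * a (m + n) t) = (\<lambda>m. dd (m + n) * y ^ (m + n) / Dg (\<delta> t))"
    by (auto simp: a_tail[OF t] y_def power_mult_distrib)
  have "A u t = (\<Sum>m. u ^ (m + n) * a (m + n) t) + (\<Sum>k<n. u ^ k * a k t)"
    unfolding A_def by (rule suminf_split_initial_segment[OF A_summable[OF t u]])
  also have "(\<Sum>m. u ^ (m + n) * a (m + n) t) = (\<Sum>m. dd (m + n) * y ^ (m + n)) / Dg (\<delta> t)"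
    unfolding tail_eq by (rule suminf_divide) (use sy summable_iff_shift[of "\<lambda>k. dd k * y ^ k" n] in simp)
  also have "(\<Sum>m. dd (m + n) * y ^ (m + n)) = Dg y - (\<Sum>k<n. dd k * y ^ k)"
    using suminf_split_initial_segment[OF sy, of n] by (simp add: Dg_sum)
  finally show ?thesis using Dd by (simp add: y_def field_simps)
qed

end

context conc
begin

lemma big_K: "\<exists>K. K > k \<and> K \<ge> n \<and> dd K > 0"
proof -
  from B2 have "\<not> (\<forall>x\<in>{k. d k k > 0}. x \<le> max k n)" by (auto simp: bdd_above_def)
  then obtain K where K0: "K \<in> {k. d k k > 0}" "\<not> K \<le> max k n" by blast
  then have K: "d K K > 0" "K > k" "K > n" by auto
  then have "dd K > 0" using B1_d[of K K] by simp
  then show ?thesis using K by auto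
qed

lemma poly_ratio: "((\<lambda>y. dd k * y ^ k / Dg y) \<longlongrightarrow> 0) at_top"
proof -
  obtain K where K: "K > k" "K \<ge> n" "dd K > 0" using big_K by blast
  define m where "m = K - k"
  have m: "m > 0" "K = k + m" using K by (auto simp: m_def)
  have up: "((\<lambda>y::real. (dd k / dd K) / y ^ m) \<longlongrightarrow> 0) at_top"
    by (intro tendsto_divide_0[OF tendsto_const] filterlim_at_top_imp_at_infinity
        filterlim_pow_at_top[OF m(1)] filterlim_ident)
  show ?thesis
  proof (rule tendsto_sandwich[OF _ _ tendsto_const up])
    show "\<forall>\<^sub>F y in at_top. 0 \<le> dd k * y ^ k / Dg y"
      using eventually_gt_at_top[of 0]
      by eventually_elim (intro divide_nonneg_pos mult_nonneg_nonneg dd_nonneg Dg_pos, auto)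
    show "\<forall>\<^sub>F y in at_top. dd k * y ^ k / Dg y \<le> (dd k / dd K) / y ^ m"
      using eventually_gt_at_top[of 0]
    proof eventually_elim
      case (elim y)
      have "dd K * y ^ K \<le> (\<Sum>j. dd j * y ^ j)"
        using sum_le_suminf[OF Dg_summable[OF elim], of "{K}"] dd_nonneg elim by simp
      then have DK: "dd K * y ^ K \<le> Dg y" by (simp add: Dg_sum)
      have pos: "dd K * y ^ K > 0" using K elim by simp
      have "dd k * y ^ k / Dg y \<le> dd k * y ^ k / (dd K * y ^ K)"
        using DK pos dd_nonneg[of k] elim by (intro divide_left_mono mult_nonneg_nonneg) auto
      also have "\<dots> = (dd k / dd K) / y ^ m" using elim K by (simp add: m(2) power_add field_simps)
      finally show ?case .
    qed
  qed
qed

lemma u\<delta>_lim: "u > 0 \<Longrightarrow> filterlim (\<lambda>t. u * \<delta> t) at_top at_top"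
  by (rule filterlim_tendsto_pos_mult_at_top[OF tendsto_const _ \<delta>_lim])

lemma term1_lim:
  assumes u: "u > 0" and k: "k < n"
  shows "((\<lambda>t. u ^ k * a k t * Dg (\<delta> t) / Dg (u * \<delta> t)) \<longlongrightarrow> 0) at_top"
proof (cases "dd k = 0")
  case True
  then have "d k k = 0" using B3_zero k by simp
  then show ?thesis by (simp add: a_def)
next
  case False
  then have ddk: "dd k > 0" using dd_nonneg[of k] by simp
  define R where "R t = (d k k * (\<delta>s k t) ^ k / gen_series (\<lambda>i. d i k) (\<delta>s k t)) /
              (dd k * (\<delta> t) ^ k / gen_series dd (\<delta> t))" for t
  have R: "(R \<longlongrightarrow> 0) at_top" unfolding R_def by (rule B3_pos[OF k ddk])
  have P: "((\<lambda>t. dd k * (u * \<delta> t) ^ k / Dg (u * \<delta> t)) \<longlongrightarrow> 0) at_top"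
    by (rule filterlim_compose[OF poly_ratio u\<delta>_lim[OF u]])
  have ev: "\<forall>\<^sub>F t in at_top. R t * (dd k * (u * \<delta> t) ^ k / Dg (u * \<delta> t)) = u ^ k * a k t * Dg (\<delta> t) / Dg (u * \<delta> t)"
    using eventually_ge_at_top[of 0]
  proof eventually_elim
    case (elim t)
    have "\<delta> t > 0" "Dg (\<delta> t) > 0" using \<delta>_pos[OF elim] Dg_pos by auto
    then show ?case using ddk by (simp add: R_def a_def[symmetric] Dg_def[symmetric] power_mult_distrib field_simps)
  qed
  have "((\<lambda>t. R t * (dd k * (u * \<delta> t) ^ k / Dg (u * \<delta> t))) \<longlongrightarrow> 0) at_top"
    using tendsto_mult[OF R P] by simp
  then show ?thesis using tendsto_cong[OF ev] by blast
qed

lemma B_lim: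
  assumes u: "u > 0"
  shows "((\<lambda>t. A u t * Dg (\<delta> t) / Dg (u * \<delta> t)) \<longlongrightarrow> 1) at_top"
proof -
  have ev: "\<forall>\<^sub>F t in at_top. 1 + (\<Sum>k<n. u ^ k * a k t * Dg (\<delta> t) / Dg (u * \<delta> t))
      - (\<Sum>k<n. dd k * (u * \<delta> t) ^ k / Dg (u * \<delta> t)) = A u t * Dg (\<delta> t) / Dg (u * \<delta> t)"
    using eventually_ge_at_top[of 0]
  proof eventually_elim
    case (elim t)
    have pos: "Dg (u * \<delta> t) > 0" using Dg_pos u \<delta>_pos[OF elim] by simp
    have s1: "(\<Sum>k<n. u ^ k * a k t * Dg (\<delta> t) / Dg (u * \<delta> t)) = (\<Sum>k<n. u ^ k * a k t) * Dg (\<delta> t) / Dg (u * \<delta> t)"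
      by (simp add: sum_divide_distrib sum_distrib_right)
    have s2: "(\<Sum>k<n. dd k * (u * \<delta> t) ^ k / Dg (u * \<delta> t)) = (\<Sum>k<n. dd k * (u * \<delta> t) ^ k) / Dg (u * \<delta> t)"
      by (simp add: sum_divide_distrib)
    show ?case
      unfolding A_split[OF elim u] s1 s2 using pos
      by (simp add: field_simps)
  qed
  have "((\<lambda>t. 1 + (\<Sum>k<n. u ^ k * a k t * Dg (\<delta> t) / Dg (u * \<delta> t))
      - (\<Sum>k<n. dd k * (u * \<delta> t) ^ k / Dg (u * \<delta> t))) \<longlongrightarrow> 1 + (\<Sum>k<n. 0) - (\<Sum>k<n. 0)) at_top"
    by (intro tendsto_intros term1_lim[OF u] filterlim_compose[OF poly_ratio u\<delta>_lim[OF u]]) auto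
  then show ?thesis using tendsto_cong[OF ev] by simp
qed

lemma v\<delta>_lim: "filterlim (\<lambda>t. v (\<delta> t)) at_top at_top"
  by (rule filterlim_compose[OF v_lim \<delta>_lim])

lemma lnA_lim:
  assumes u: "u > 0"
  shows "((\<lambda>t. ln (A u t) / v (\<delta> t)) \<longlongrightarrow> \<Delta> u - \<Delta> 1) at_top"
proof -
  define B where "B t = A u t * Dg (\<delta> t) / Dg (u * \<delta> t)" for t
  have B: "(B \<longlongrightarrow> 1) at_top" unfolding B_def by (rule B_lim[OF u])
  have Bpos: "\<forall>\<^sub>F t in at_top. B t > 0" using B by (intro order_tendstoD(1)) auto
  have ev: "\<forall>\<^sub>F t in at_top. ln (Dg (u * \<delta> t)) / v (\<delta> t) + ln (B t) / v (\<delta> t) - ln (Dg (1 * \<delta> t)) / v (\<delta> t)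
      = ln (A u t) / v (\<delta> t)"
    using Bpos eventually_ge_at_top[of 0]
  proof eventually_elim
    case (elim t)
    have p1: "Dg (u * \<delta> t) > 0" and p2: "Dg (\<delta> t) > 0" using Dg_pos u \<delta>_pos[OF elim(2)] by auto
    have "A u t = B t * Dg (u * \<delta> t) / Dg (\<delta> t)" using p1 p2 by (simp add: B_def)
    then have "ln (A u t) = ln (B t) + ln (Dg (u * \<delta> t)) - ln (Dg (\<delta> t))"
      using p1 p2 elim(1) by (simp add: ln_mult ln_div)
    then show ?case by (simp add: diff_divide_distrib add_divide_distrib)
  qed
  have l1: "((\<lambda>t. ln (Dg (u * \<delta> t)) / v (\<delta> t)) \<longlongrightarrow> \<Delta> u) at_top"
    unfolding Dg_def by (rule filterlim_compose[OF \<Delta>_lim[OF u] \<delta>_lim])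
  have l2: "((\<lambda>t. ln (Dg (1 * \<delta> t)) / v (\<delta> t)) \<longlongrightarrow> \<Delta> 1) at_top"
    unfolding Dg_def by (rule filterlim_compose[OF \<Delta>_lim \<delta>_lim]) simp
  have l3: "((\<lambda>t. ln (B t) / v (\<delta> t)) \<longlongrightarrow> 0) at_top"
    by (intro tendsto_divide_0[OF _ filterlim_at_top_imp_at_infinity[OF v\<delta>_lim]])
       (use tendsto_ln[OF B] in simp)
  have "((\<lambda>t. ln (Dg (u * \<delta> t)) / v (\<delta> t) + ln (B t) / v (\<delta> t) - ln (Dg (1 * \<delta> t)) / v (\<delta> t))
     \<longlongrightarrow> \<Delta> u + 0 - \<Delta> 1) at_top"
    by (intro tendsto_intros l1 l2 l3)
  then show ?thesis using tendsto_cong[OF ev] by simp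
qed

end

context conc
begin

definition pt where "pt t k = measure (M t) {\<omega> \<in> space (M t). N t \<omega> = k}"
definition p0 where "p0 t k = (if t \<ge> 0 then pt t k else (if k = 0 then 1 else 0))"
definition s0 where "s0 t = (if t \<ge> 0 then v (\<delta> t) else 1)"

lemma meas_preimage:
  assumes t: "t \<ge> 0"
  shows "(\<lambda>k. measure (M t) {\<omega> \<in> space (M t). N t \<omega> = k \<and> Q k}) sums measure (M t) {\<omega> \<in> space (M t). Q (N t \<omega>)}"
proof -
  interpret prob_space "M t" using prob_sp[OF t] .
  have sets: "{\<omega> \<in> space (M t). N t \<omega> = k \<and> Q k} \<in> sets (M t)" for k
  proof -
    have "N t -` {k} \<inter> space (M t) \<in> sets (M t)" using N_meas[OF t] by (rule measurable_sets) simp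
    moreover have "{\<omega> \<in> space (M t). N t \<omega> = k \<and> Q k} = (if Q k then N t -` {k} \<inter> space (M t) else {})" by auto
    ultimately show ?thesis by simp
  qed
  have "(\<lambda>k. measure (M t) {\<omega> \<in> space (M t). N t \<omega> = k \<and> Q k}) sums measure (M t) (\<Union>k. {\<omega> \<in> space (M t). N t \<omega> = k \<and> Q k})"
    by (rule finite_measure_UNION) (use sets in \<open>auto simp: disjoint_family_on_def\<close>)
  moreover have "(\<Union>k. {\<omega> \<in> space (M t). N t \<omega> = k \<and> Q k}) = {\<omega> \<in> space (M t). Q (N t \<omega>)}" by auto
  ultimately show ?thesis by simp
qed

lemma pt_sums: "t \<ge> 0 \<Longrightarrow> pt t sums 1"
proof -
  assume t: "t \<ge> 0"
  interpret prob_space "M t" using prob_sp[OF t] .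
  have "(\<lambda>k. measure (M t) {\<omega> \<in> space (M t). N t \<omega> = k \<and> True}) sums measure (M t) {\<omega> \<in> space (M t). True}"
    by (rule meas_preimage[OF t])
  moreover have "pt t = (\<lambda>k. measure (M t) {\<omega> \<in> space (M t). N t \<omega> = k})" by (rule ext) (simp add: pt_def)
  ultimately show ?thesis by (simp add: prob_space)
qed

lemma pt_eq: "t \<ge> 0 \<Longrightarrow> pt t k = a k t / A 1 t"
  using N_law[of t k] by (simp add: pt_def a_def A_def)

lemma Z_pos: assumes t: "t \<ge> 0" shows "A 1 t > 0"
proof -
  have "A 1 t \<noteq> 0"
  proof
    assume "A 1 t = 0"
    then have "pt t = (\<lambda>_. 0)" using pt_eq[OF t] by auto
    then show False using pt_sums[OF t] by (metis sums_0 sums_unique2 zero_neq_one)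
  qed
  moreover have "A 1 t \<ge> 0" unfolding A_def using a_nonneg[OF t] by (intro suminf_nonneg) (use A_summable[OF t, of 1] in auto)
  ultimately show ?thesis by simp
qed

lemma A_pos: assumes t: "t \<ge> 0" and u: "u > 0" shows "A u t > 0"
proof -
  have nn1: "\<And>k. 0 \<le> 1 ^ k * a k t" using a_nonneg[OF t] by simp
  have "0 < (\<Sum>k. 1 ^ k * a k t)" using Z_pos[OF t] by (simp add: A_def)
  then have "\<exists>i. 0 < 1 ^ i * a i t" using suminf_pos_iff[OF A_summable[OF t, of 1] nn1] by simp
  then obtain i where i: "a i t > 0" by auto
  have nnu: "\<And>k. 0 \<le> u ^ k * a k t" using a_nonneg[OF t] u by simp
  have "0 < u ^ i * a i t" using u i by simp
  then have "0 < (\<Sum>k. u ^ k * a k t)" using suminf_pos_iff[OF A_summable[OF t u] nnu] by blast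
  then show ?thesis by (simp add: A_def)
qed

lemma exp_pow: "exp (\<theta> * real k) = exp \<theta> ^ k"
  using exp_of_nat_mult[of k \<theta>] by (simp add: mult.commute)

lemma p0_eq: "t \<ge> 0 \<Longrightarrow> exp (\<theta> * real k) * p0 t k = exp \<theta> ^ k * a k t / A 1 t"
  by (simp add: p0_def pt_eq exp_pow)

lemma L_eq: assumes t: "t \<ge> 0"
  shows "(\<Sum>k. exp (\<theta> * real k) * p0 t k) = A (exp \<theta>) t / A 1 t"
proof -
  have "(\<lambda>k. exp (\<theta> * real k) * p0 t k) = (\<lambda>k. exp \<theta> ^ k * a k t / A 1 t)"
    using t by (simp add: p0_eq)
  then show ?thesis unfolding A_def by (simp add: suminf_divide[OF A_summable[OF t]])
qed

lemma L_summable0: "summable (\<lambda>k. exp (\<theta> * real k) * p0 t k)"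
proof (cases "t \<ge> 0")
  case True
  have "(\<lambda>k. exp (\<theta> * real k) * p0 t k) = (\<lambda>k. exp \<theta> ^ k * a k t / A 1 t)"
    using True by (simp add: p0_eq)
  then show ?thesis using summable_divide[OF A_summable[OF True, of "exp \<theta>"]] by simp
next
  case False
  have "(\<lambda>k. exp (\<theta> * real k) * p0 t k) = (\<lambda>k. if k = 0 then exp (\<theta> * real k) else 0)"
    using False by (auto simp: p0_def)
  then show ?thesis by simp
qed

lemma p0_nonneg: "p0 t k \<ge> 0" by (simp add: p0_def pt_def)

lemma p0_sums: "p0 t sums 1"
proof (cases "t \<ge> 0")
  case True
  then have "p0 t = pt t" by (auto simp: p0_def)
  then show ?thesis using pt_sums[OF True] by simp
next
  case False
  then have "p0 t = (\<lambda>k. if k = 0 then (\<lambda>_. 1::real) k else 0)" by (auto simp: p0_def)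
  then show ?thesis using sums_single[of 0 "\<lambda>_. 1::real"] by simp
qed

lemma s0_pos: "s0 t > 0"
proof (cases "t \<ge> 0")
  case True
  then have "\<delta> t > 0" by (rule \<delta>_pos)
  then show ?thesis using True v_pos by (simp add: s0_def)
qed (simp add: s0_def)

lemma s0_lim: "filterlim s0 at_top at_top"
proof -
  have "\<forall>\<^sub>F t in at_top. v (\<delta> t) = s0 t"
    using eventually_ge_at_top[of 0] by eventually_elim (simp add: s0_def)
  from filterlim_cong[OF refl refl this] v\<delta>_lim show ?thesis by simp
qed

lemma L_lim0: "((\<lambda>t. ln (\<Sum>k. exp (\<theta> * real k) * p0 t k) / s0 t) \<longlongrightarrow> \<Delta> (exp \<theta>) - \<Delta> 1) at_top"
proof -
  have ev: "\<forall>\<^sub>F t in at_top. ln (A (exp \<theta>) t) / v (\<delta> t) - ln (A 1 t) / v (\<delta> t) = ln (\<Sum>k. exp (\<theta> * real k) * p0 t k) / s0 t"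
    using eventually_ge_at_top[of 0]
  proof eventually_elim
    case (elim t)
    have "ln (A (exp \<theta>) t / A 1 t) = ln (A (exp \<theta>) t) - ln (A 1 t)"
      using A_pos[OF elim, of "exp \<theta>"] Z_pos[OF elim] by (simp add: ln_div)
    then show ?case by (simp add: L_eq[OF elim] s0_def elim diff_divide_distrib)
  qed
  have "((\<lambda>t. ln (A (exp \<theta>) t) / v (\<delta> t) - ln (A 1 t) / v (\<delta> t)) \<longlongrightarrow> (\<Delta> (exp \<theta>) - \<Delta> 1) - (\<Delta> 1 - \<Delta> 1)) at_top"
    by (intro tendsto_intros lnA_lim) auto
  then show ?thesis using tendsto_cong[OF ev] by simp
qed

lemma \<Lambda>c_diff: "(\<lambda>\<theta>. \<Delta> (exp \<theta>) - \<Delta> 1) differentiable (at \<theta>)"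
proof -
  have "(\<lambda>\<theta>. \<Delta> (exp \<theta>)) differentiable (at \<theta>)"
    by (rule differentiable_compose[of \<Delta>, OF \<Delta>_diff]) (simp, use DERIV_exp real_differentiable_def in blast)
  then show ?thesis by (intro differentiable_diff differentiable_const)
qed

lemma ldp: "ldp_nat p0 s0 (\<lambda>\<theta>. \<Delta> (exp \<theta>) - \<Delta> 1)"
  by (rule ldp_nat.intro[OF p0_nonneg p0_sums s0_pos s0_lim L_summable0 L_lim0 \<Lambda>c_diff])

end

context conc
begin

interpretation L: ldp_nat p0 s0 "(\<lambda>\<theta>. \<Delta> (exp \<theta>) - \<Delta> 1)" by (rule ldp)

lemma P_eq:
  assumes t: "t \<ge> 0"
  shows "measure (M t) {\<omega> \<in> space (M t). real (N t \<omega>) / v (\<delta> t) \<in> B} = L.P t B"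
proof -
  have "(\<lambda>k. measure (M t) {\<omega> \<in> space (M t). N t \<omega> = k \<and> real k / v (\<delta> t) \<in> B}) sums
      measure (M t) {\<omega> \<in> space (M t). real (N t \<omega>) / v (\<delta> t) \<in> B}"
    by (rule meas_preimage[OF t])
  moreover have "(\<lambda>k. measure (M t) {\<omega> \<in> space (M t). N t \<omega> = k \<and> real k / v (\<delta> t) \<in> B})
      = (\<lambda>k. if real k / s0 t \<in> B then p0 t k else 0)"
    using t by (auto simp: s0_def p0_def pt_def)
  ultimately show ?thesis unfolding L.P_def by (simp add: sums_iff)
qed

theorem result:
  "LDP (\<lambda>t A. measure (M t) {\<omega> \<in> space (M t). real (N t \<omega>) / v (\<delta> t) \<in> A})
             (\<lambda>t. v (\<delta> t))
             (legendre (\<lambda>\<theta>. \<Delta> (exp \<theta>) - \<Delta> 1))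
         \<and> good_rate_function (legendre (\<lambda>\<theta>. \<Delta> (exp \<theta>) - \<Delta> 1))"
proof -
  have main: "LDP L.P s0 (legendre (\<lambda>\<theta>. \<Delta> (exp \<theta>) - \<Delta> 1))" and good: "good_rate_function (legendre (\<lambda>\<theta>. \<Delta> (exp \<theta>) - \<Delta> 1))"
    using L.main by auto
  have ev: "\<forall>\<^sub>F t in at_top. ereal (1 / v (\<delta> t)) * elog (measure (M t) {\<omega> \<in> space (M t). real (N t \<omega>) / v (\<delta> t) \<in> B})
      = ereal (1 / s0 t) * elog (L.P t B)" for B
    using eventually_ge_at_top[of 0] by eventually_elim (simp add: P_eq s0_def)
  show ?thesis
    using main good unfolding LDP_def by (simp add: Limsup_eq[OF ev] Liminf_eq[OF ev])
qed

end

theorem proposition3p1: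
  fixes d :: "nat \<Rightarrow> nat \<Rightarrow> real"         \<comment> \<open>d k j = d_{k,j}\<close>
    and \<delta>s :: "nat \<Rightarrow> real \<Rightarrow> real"     \<comment> \<open>\<delta>s j t = \<delta>_j(t)\<close>
    and M :: "real \<Rightarrow> 'a measure"
    and N :: "real \<Rightarrow> 'a \<Rightarrow> nat"
    and n :: nat
    and dd :: "nat \<Rightarrow> real"               \<comment> \<open>dd k = d_k\<close>
    and \<delta> :: "real \<Rightarrow> real"
    and v :: "real \<Rightarrow> real"
    and \<Delta> :: "real \<Rightarrow> real"
  assumes d_nonneg: "\<And>k j. d k j \<ge> 0"
    and D_fin: "\<And>j x. x > 0 \<Longrightarrow> summable (\<lambda>k. d k j * x ^ k) \<and> gen_series (\<lambda>k. d k j) x > 0"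
    and \<delta>s_pos: "\<And>j t. t \<ge> 0 \<Longrightarrow> \<delta>s j t > 0"
    and \<delta>s_lim: "\<And>j. filterlim (\<delta>s j) at_top at_top"
    and Z_fin: "\<And>x. x > 0 \<Longrightarrow>
        summable (\<lambda>j. d j j * x ^ j / gen_series (\<lambda>k. d k j) x) \<and>
        (\<Sum>j. d j j * x ^ j / gen_series (\<lambda>k. d k j) x) > 0"
    and prob_sp: "\<And>t. t \<ge> 0 \<Longrightarrow> prob_space (M t)"
    and N_meas: "\<And>t. t \<ge> 0 \<Longrightarrow> N t \<in> measurable (M t) (count_space UNIV)"
    and N_law: "\<And>t k. t \<ge> 0 \<Longrightarrow>
        measure (M t) {\<omega> \<in> space (M t). N t \<omega> = k} =
          (d k k * (\<delta>s k t) ^ k / gen_series (\<lambda>i. d i k) (\<delta>s k t)) /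
          (\<Sum>j. d j j * (\<delta>s j t) ^ j / gen_series (\<lambda>i. d i j) (\<delta>s j t))"
    \<comment> \<open>(B1)\<close>
    and B1_d: "\<And>j k. j \<ge> n \<Longrightarrow> d k j = dd k"
    and B1_\<delta>: "\<And>j t. j \<ge> n \<Longrightarrow> t \<ge> 0 \<Longrightarrow> \<delta>s j t = \<delta> t"
    and v_pos: "\<And>t. t > 0 \<Longrightarrow> v t > 0"
    and v_lim: "filterlim v at_top at_top"
    and \<Delta>_diff: "\<And>u. u > 0 \<Longrightarrow> \<Delta> differentiable (at u)"
    and \<Delta>_lim: "\<And>u. u > 0 \<Longrightarrow>
        ((\<lambda>t. ln (gen_series dd (u * t)) / v t) \<longlongrightarrow> \<Delta> u) at_top"
    \<comment> \<open>(B2)\<close>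
    and B2: "\<not> bdd_above {k. d k k > 0}"
    \<comment> \<open>(B3)\<close>
    and B3_pos: "\<And>k. k < n \<Longrightarrow> dd k > 0 \<Longrightarrow>
        ((\<lambda>t. (d k k * (\<delta>s k t) ^ k / gen_series (\<lambda>i. d i k) (\<delta>s k t)) /
              (dd k * (\<delta> t) ^ k / gen_series dd (\<delta> t))) \<longlongrightarrow> 0) at_top"
    and B3_zero: "\<And>k. k < n \<Longrightarrow> dd k = 0 \<Longrightarrow> d k k = 0"
  shows "LDP (\<lambda>t A. measure (M t) {\<omega> \<in> space (M t). real (N t \<omega>) / v (\<delta> t) \<in> A})
             (\<lambda>t. v (\<delta> t))
             (legendre (\<lambda>\<theta>. \<Delta> (exp \<theta>) - \<Delta> 1))
         \<and> good_rate_function (legendre (\<lambda>\<theta>. \<Delta> (exp \<theta>) - \<Delta> 1))"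
proof -
  have "conc d \<delta>s M N n dd \<delta> v \<Delta>"
    by (rule conc.intro) (fact assms)+
  then show ?thesis by (rule conc.result)
qed

end
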